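(* Let $\Gamma=(\mathcal{G},\mathcal{I},\boldsymbol{c})$ be a nonatomic routing game and suppose there is $\beta\in\mathbb{R}_+$ such that every edge $e\in\mathcal{E}$ has a BPR-type cost function $c_e(x)=t_e+a_e x^{\beta}$ with $t_e,a_e\in\mathbb{R}_+$. Let $\boldsymbol{\tau}\in\mathbb{R}^{\mathcal{E}}$ be a toll vector such that $$\sum_{e\in p}\Bigl(\tau_e+\tfrac{\beta}{\beta+1}t_e\Bigr)\le \sum_{e\in p'}\Bigl(\tau_e+\tfrac{\beta}{\beta+1}t_e\Bigr)$$ for all $i\in\mathcal{I}$, all $p\in\mathcal{P}^{*i}$ and all $p'\in\mathcal{P}^i$. Then $\boldsymbol{\tau}$ is a demand-independent optimal toll (DIOT) for $\Gamma$.
   Context: A nonatomic routing game $\Gamma=(\mathcal{G},\mathcal{I},\boldsymbol{c})$ consists of a finite directed multigraph $\mathcal{G}=(\mathcal{V},\mathcal{E})$, a finite set $\mathcal{I}$ of origin-destination (OD) pairs $i$, each with origin $o^i\in\mathcal{V}$ and destination $d^i\in\mathcal{V}$, and for each edge $e$ a nondecreasing continuous cost function $c_e:\mathbb{R}_+\to\mathbb{R}_+$. $\mathcal{P}^i$ is the set of simple directed $o^i$–$d^i$ paths, $\mathcal{P}=\bigcup_i\mathcal{P}^i$. For a demand vector $\boldsymbol{\mu}\in\mathbb{R}_+^{\mathcal{I}}$, the feasible flows are $\mathcal{F}(\boldsymbol{\mu})=\{\boldsymbol{f}\in\mathbb{R}_+^{\mathcal{P}}:\sum_{p\in\mathcal{P}^i}f_p=\mu^i\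 \forall i\}$; the load on $e$ is $x_e=\sum_{p\ni e}f_p$, and the path cost is $c_p(\boldsymbol{f})=\sum_{e\in p}c_e(x_e)$. A flow $\boldsymbol{f}\in\mathcal{F}(\boldsymbol{\mu})$ is a Wardrop equilibrium if for all $i$ and all $p,p'\in\mathcal{P}^i$ with $f_p>0$, $c_p(\boldsymbol{f})\le c_{p'}(\boldsymbol{f})$. The total cost is $L(\boldsymbol{f})=\sum_{p}f_pc_p(\boldsymbol{f})$; a system optimum for $\boldsymbol{\mu}$ is a minimizer of $L$ over $\mathcal{F}(\boldsymbol{\mu})$. $\mathcal{P}^{*i}$ is the set of paths $p\in\mathcal{P}^i$ such that $f^*_p(\boldsymbol{\mu})>0$ for some demand vector $\boldsymbol{\mu}$ and some corresponding system optimum $\boldsymbol{f}^*(\boldsymbol{\mu})$. For a toll vector $\boldsymbol{\tau}\in\mathbb{R}^{\mathcal{E}}$ (entries may be negative), $\Gamma^{\boldsymbol{\tau}}$ is the game with edge costs $c_e(x)+\tau_e$. A toll vector $\boldsymbol{\tau}$ is a demand-independent optimal toll (DIOT) for $\Gamma$ if for every demand vector $\boldsymbol{\mu}\in\mathbb{R}_+^{\mathcal{I}}$, every Wardrop equilibrium of $\Gamma^{\boldsymbol{\tau}}$ with demand $\boldsymbol{\mu}$ is a system optimum of $\Gamma$ for demand $\boldsymbol{\mu}$ (i.e., minimizes $L$, computed with the untolled costs, over $\mathcal{F}(\boldsymbol{\mu})$). *)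

theory Defs
  imports Complex_Main
begin

record ('v, 'e, 'i) network =
  verts :: "'v set"
  edges :: "'e set"
  etail :: "'e \<Rightarrow> 'v"
  ehead :: "'e \<Rightarrow> 'v"
  ods   :: "'i set"
  orig  :: "'i \<Rightarrow> 'v"
  dest  :: "'i \<Rightarrow> 'v"

definition wf_network :: "('v, 'e, 'i) network \<Rightarrow> bool" where
  "wf_network N \<longleftrightarrow> finite (verts N) \<and> finite (edges N) \<and> finite (ods N) \<and>
     (\<forall>e\<in>edges N. etail N e \<in> verts N \<and> ehead N e \<in> verts N) \<and>
     (\<forall>i\<in>ods N. orig N i \<in> verts N \<and> dest N i \<in> verts N)"

definition pverts :: "('v, 'e, 'i) network \<Rightarrow> 'v \<Rightarrow> 'e list \<Rightarrow> 'v list" where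
  "pverts N u p = u # map (ehead N) p"

definition is_simple_path :: "('v, 'e, 'i) network \<Rightarrow> 'v \<Rightarrow> 'v \<Rightarrow> 'e list \<Rightarrow> bool" where
  "is_simple_path N u v p \<longleftrightarrow> set p \<subseteq> edges N \<and>
     (\<forall>k < length p. etail N (p ! k) = pverts N u p ! k) \<and>
     distinct (pverts N u p) \<and> last (pverts N u p) = v"

definition Paths :: "('v, 'e, 'i) network \<Rightarrow> 'i \<Rightarrow> 'e list set" where
  "Paths N i = {p. is_simple_path N (orig N i) (dest N i) p}"

definition feasible :: "('v, 'e, 'i) network \<Rightarrow> ('i \<Rightarrow> real) \<Rightarrow> ('i \<Rightarrow> 'e list \<Rightarrow> real) \<Rightarrow> bool" where
  "feasible N \<mu> f \<longleftrightarrow> (\<forall>i\<in>ods N. \<forall>p\<in>Paths N i. f i p \<ge> 0) \<and>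
     (\<forall>i\<in>ods N. (\<Sum>p\<in>Paths N i. f i p) = \<mu> i)"

definition load :: "('v, 'e, 'i) network \<Rightarrow> ('i \<Rightarrow> 'e list \<Rightarrow> real) \<Rightarrow> 'e \<Rightarrow> real" where
  "load N f e = (\<Sum>i\<in>ods N. \<Sum>p\<in>Paths N i. if e \<in> set p then f i p else 0)"

definition path_cost :: "('v, 'e, 'i) network \<Rightarrow> ('e \<Rightarrow> real \<Rightarrow> real) \<Rightarrow>
    ('i \<Rightarrow> 'e list \<Rightarrow> real) \<Rightarrow> 'e list \<Rightarrow> real" where
  "path_cost N c f p = (\<Sum>e\<leftarrow>p. c e (load N f e))"

definition wardrop :: "('v, 'e, 'i) network \<Rightarrow> ('e \<Rightarrow> real \<Rightarrow> real) \<Rightarrow> ('i \<Rightarrow> real) \<Rightarrow>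
    ('i \<Rightarrow> 'e list \<Rightarrow> real) \<Rightarrow> bool" where
  "wardrop N c \<mu> f \<longleftrightarrow> feasible N \<mu> f \<and>
     (\<forall>i\<in>ods N. \<forall>p\<in>Paths N i. \<forall>p'\<in>Paths N i. f i p > 0 \<longrightarrow> path_cost N c f p \<le> path_cost N c f p')"

definition total_cost :: "('v, 'e, 'i) network \<Rightarrow> ('e \<Rightarrow> real \<Rightarrow> real) \<Rightarrow>
    ('i \<Rightarrow> 'e list \<Rightarrow> real) \<Rightarrow> real" where
  "total_cost N c f = (\<Sum>i\<in>ods N. \<Sum>p\<in>Paths N i. f i p * path_cost N c f p)"

definition system_opt :: "('v, 'e, 'i) network \<Rightarrow> ('e \<Rightarrow> real \<Rightarrow> real) \<Rightarrow> ('i \<Rightarrow> real) \<Rightarrow>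
    ('i \<Rightarrow> 'e list \<Rightarrow> real) \<Rightarrow> bool" where
  "system_opt N c \<mu> f \<longleftrightarrow> feasible N \<mu> f \<and>
     (\<forall>g. feasible N \<mu> g \<longrightarrow> total_cost N c f \<le> total_cost N c g)"

definition demand :: "('v, 'e, 'i) network \<Rightarrow> ('i \<Rightarrow> real) \<Rightarrow> bool" where
  "demand N \<mu> \<longleftrightarrow> (\<forall>i\<in>ods N. \<mu> i \<ge> 0)"

definition SO_Paths :: "('v, 'e, 'i) network \<Rightarrow> ('e \<Rightarrow> real \<Rightarrow> real) \<Rightarrow> 'i \<Rightarrow> 'e list set" where
  "SO_Paths N c i = {p \<in> Paths N i. \<exists>\<mu> f. demand N \<mu> \<and> system_opt N c \<mu> f \<and> f i p > 0}"

definition tolled :: "('e \<Rightarrow> real \<Rightarrow> real) \<Rightarrow> ('e \<Rightarrow> real) \<Rightarrow> 'e \<Rightarrow> real \<Rightarrow> real" where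
  "tolled c \<tau> e x = c e x + \<tau> e"

definition DIOT :: "('v, 'e, 'i) network \<Rightarrow> ('e \<Rightarrow> real \<Rightarrow> real) \<Rightarrow> ('e \<Rightarrow> real) \<Rightarrow> bool" where
  "DIOT N c \<tau> \<longleftrightarrow> (\<forall>\<mu> f. demand N \<mu> \<longrightarrow> wardrop N (tolled c \<tau>) \<mu> f \<longrightarrow> system_opt N c \<mu> f)"

text \<open>x^beta for x \<ge> 0, beta \<ge> 0, with the convention x^0 = 1 (powr has 0 powr 0 = 0).\<close>
definition rpow :: "real \<Rightarrow> real \<Rightarrow> real" where
  "rpow x \<beta> = (if \<beta> = 0 then 1 else x powr \<beta>)"

end

theory Submission imports Defs "HOL-Analysis.Analysis" begin

lemma rpow_nonneg: "0 \<le> rpow x b" by (simp add: rpow_def)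

lemma rpow_mono: "0 \<le> b \<Longrightarrow> 0 \<le> x \<Longrightarrow> x \<le> y \<Longrightarrow> rpow x b \<le> rpow y b"
  by (simp add: rpow_def powr_mono2)

lemma mul_rpow: assumes "0 \<le> x" "0 < b" shows "x * rpow x b = x powr (b+1)"
proof (cases "x = 0")
  case False
  then have "x powr (b+1) = x powr b * x powr 1" by (simp add: powr_add)
  then show ?thesis using assms False by (simp add: rpow_def)
qed (simp add: rpow_def)

lemma powr_tangent:
  fixes x y q :: real
  assumes "0 < x" "0 < y" "1 \<le> q"
  shows "y powr q - x powr q \<ge> q * x powr (q-1) * (y - x)"
proof -
  have der: "\<And>z. 0 < z \<Longrightarrow> DERIV (\<lambda>z. z powr q) z :> q * z powr (q - 1)"
    by (rule derivative_eq_intros | simp)+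
  consider "x < y" | "x = y" | "y < x" by linarith
  then show ?thesis
  proof cases
    case 1
    then obtain z where z: "x < z" "z < y" "y powr q - x powr q = (y - x) * (q * z powr (q-1))"
      using MVT2[of x y "\<lambda>z. z powr q" "\<lambda>z. q * z powr (q - 1)"] der assms by force
    have "x powr (q-1) \<le> z powr (q-1)" using z assms by (intro powr_mono2) auto
    then have "q * x powr (q-1) \<le> q * z powr (q-1)" using assms by simp
    then have "(y - x) * (q * x powr (q-1)) \<le> (y - x) * (q * z powr (q-1))"
      using mult_left_mono[of "q * x powr (q-1)" "q * z powr (q-1)" "y - x"] 1 by auto
    then show ?thesis using z by (simp add: algebra_simps)
  next
    case 3
    then obtain z where z: "y < z" "z < x" "x powr q - y powr q = (x - y) * (q * z powr (q-1))"
      using MVT2[of y x "\<lambda>z. z powr q" "\<lambda>z. q * z powr (q - 1)"] der assms by force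
    have "z powr (q-1) \<le> x powr (q-1)" using z assms by (intro powr_mono2) auto
    then have "q * z powr (q-1) \<le> q * x powr (q-1)" using assms by simp
    then have "(x - y) * (q * z powr (q-1)) \<le> (x - y) * (q * x powr (q-1))"
      using mult_left_mono[of "q * z powr (q-1)" "q * x powr (q-1)" "x - y"] 3 by auto
    then show ?thesis using z by (simp add: algebra_simps)
  qed simp
qed

lemma rpow_tangent:
  assumes "0 \<le> x" "0 \<le> y" "0 \<le> b"
  shows "y * rpow y b - x * rpow x b \<ge> (b+1) * rpow x b * (y - x)"
proof (cases "b = 0")
  case True then show ?thesis by (simp add: rpow_def)
next
  case False
  then have b: "0 < b" using assms by simp
  show ?thesis
  proof (cases "x = 0")
    case True then show ?thesis using b assms by (simp add: rpow_def)
  next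
    case xn: False
    show ?thesis
    proof (cases "y = 0")
      case True
      have "x powr (b+1) = x powr b * x" using xn assms by (simp add: powr_add)
      moreover have "0 \<le> b * x powr b * x" using assms by simp
      ultimately show ?thesis using True b by (simp add: rpow_def algebra_simps)
    next
      case False
      have "y powr (b+1) - x powr (b+1) \<ge> (b+1) * x powr (b+1-1) * (y - x)"
        using powr_tangent[of x y "b+1"] assms xn False b by simp
      then show ?thesis using mul_rpow[of x b] mul_rpow[of y b] assms b by (simp add: rpow_def)
    qed
  qed
qed

lemma VI:
  fixes f g C :: "'p \<Rightarrow> real"
  assumes "finite P" "\<forall>p\<in>P. f p \<ge> 0" "\<forall>p\<in>P. g p \<ge> 0" "sum f P = sum g P"
    and "\<forall>p\<in>P. f p > 0 \<longrightarrow> (\<forall>p'\<in>P. C p \<le> C p')"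
  shows "(\<Sum>p\<in>P. C p * f p) \<le> (\<Sum>p\<in>P. C p * g p)"
proof (cases "\<exists>p0\<in>P. f p0 > 0")
  case True
  then obtain p0 where p0: "p0 \<in> P" "f p0 > 0" by blast
  define m where "m = C p0"
  have "(\<Sum>p\<in>P. C p * f p) = (\<Sum>p\<in>P. m * f p)"
  proof (rule sum.cong)
    fix p assume p: "p \<in> P"
    show "C p * f p = m * f p"
    proof (cases "f p > 0")
      case True
      then have "C p \<le> C p0" "C p0 \<le> C p" using assms(5) p p0 by auto
      then show ?thesis by (simp add: m_def)
    next
      case False then have "f p = 0" using assms(2) p by force
      then show ?thesis by simp
    qed
  qed simp
  also have "\<dots> = (\<Sum>p\<in>P. m * g p)" using assms(4) by (simp add: sum_distrib_left[symmetric])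
  also have "\<dots> \<le> (\<Sum>p\<in>P. C p * g p)"
    using assms(3,5) p0 by (intro sum_mono mult_right_mono) (auto simp: m_def)
  finally show ?thesis .
next
  case False
  then have f0: "\<forall>p\<in>P. f p = 0" using assms(2) by force
  then have "sum g P = 0" using assms(4) by simp
  then have "\<forall>p\<in>P. g p = 0" using assms(1,3) sum_nonneg_eq_0_iff by blast
  then show ?thesis using f0 by simp
qed

lemma path_distinct: "p \<in> Paths N i \<Longrightarrow> distinct p"
  unfolding Paths_def is_simple_path_def pverts_def
  by (auto simp: distinct_map)

lemma path_edges: "p \<in> Paths N i \<Longrightarrow> set p \<subseteq> edges N"
  unfolding Paths_def is_simple_path_def by auto

lemma finite_Paths: assumes "wf_network N" shows "finite (Paths N i)"
proof -
  have fe: "finite (edges N)" using assms by (simp add: wf_network_def)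
  have "Paths N i \<subseteq> {xs. set xs \<subseteq> edges N \<and> length xs \<le> card (edges N)}"
  proof
    fix p assume p: "p \<in> Paths N i"
    have "length p = card (set p)" using path_distinct[OF p] by (simp add: distinct_card)
    also have "\<dots> \<le> card (edges N)" using path_edges[OF p] fe by (intro card_mono)
    finally show "p \<in> {xs. set xs \<subseteq> edges N \<and> length xs \<le> card (edges N)}"
      using path_edges[OF p] by simp
  qed
  then show ?thesis using finite_lists_length_le[OF fe] finite_subset by blast
qed

lemma path_sum: assumes "p \<in> Paths N i" "finite (edges N)"
  shows "(\<Sum>e\<leftarrow>p. w e) = (\<Sum>e\<in>edges N. if e \<in> set p then w e else 0)"
proof -
  have "(\<Sum>e\<leftarrow>p. w e) = (\<Sum>e\<in>set p. w e)"
    using path_distinct[OF assms(1)] by (simp add: sum_list_distinct_conv_sum_set)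
  also have "\<dots> = (\<Sum>e\<in>edges N. if e \<in> set p then w e else 0)"
    using path_edges[OF assms(1)] assms(2)
  proof -
    have "{e. e \<in> edges N \<and> e \<in> set p} = set p" using path_edges[OF assms(1)] by auto
    then show ?thesis using sum.inter_filter[of "edges N" w "\<lambda>e. e \<in> set p"] assms(2) by simp
  qed
  finally show ?thesis .
qed

lemma exchange:
  assumes "wf_network N"
  shows "(\<Sum>i\<in>ods N. \<Sum>p\<in>Paths N i. f i p * (\<Sum>e\<leftarrow>p. w e)) = (\<Sum>e\<in>edges N. w e * load N f e)"
proof -
  have fe: "finite (edges N)" using assms by (simp add: wf_network_def)
  have "(\<Sum>i\<in>ods N. \<Sum>p\<in>Paths N i. f i p * (\<Sum>e\<leftarrow>p. w e)) =
        (\<Sum>i\<in>ods N. \<Sum>p\<in>Paths N i. \<Sum>e\<in>edges N. w e * (if e \<in> set p then f i p else 0))"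
    by (intro sum.cong refl) (simp add: path_sum[OF _ fe] sum_distrib_left if_distrib ac_simps cong: if_cong)
  also have "\<dots> = (\<Sum>i\<in>ods N. \<Sum>e\<in>edges N. \<Sum>p\<in>Paths N i. w e * (if e \<in> set p then f i p else 0))"
    by (intro sum.cong refl sum.swap)
  also have "\<dots> = (\<Sum>e\<in>edges N. \<Sum>i\<in>ods N. \<Sum>p\<in>Paths N i. w e * (if e \<in> set p then f i p else 0))"
    by (rule sum.swap)
  also have "\<dots> = (\<Sum>e\<in>edges N. w e * load N f e)"
    by (simp add: load_def sum_distrib_left)
  finally show ?thesis .
qed

lemma load_nonneg: "feasible N \<mu> f \<Longrightarrow> 0 \<le> load N f e"
  unfolding load_def feasible_def by (auto intro!: sum_nonneg)

lemma load_comb: "load N (\<lambda>i p. u * g i p + v * f i p) e = u * load N g e + v * load N f e"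
  unfolding load_def
  by (simp add: sum_distrib_left sum.distrib[symmetric] if_distrib cong: if_cong)

lemma feasible_comb: assumes "feasible N \<mu> g" "feasible N \<mu> f" "0 \<le> s" "s \<le> 1"
  shows "feasible N \<mu> (\<lambda>i p. (1 - s) * g i p + s * f i p)"
  using assms unfolding feasible_def
proof (intro conjI ballI)
  fix i p assume "i \<in> ods N" "p \<in> Paths N i"
  then show "0 \<le> (1 - s) * g i p + s * f i p" using assms unfolding feasible_def by auto
next
  fix i assume "i \<in> ods N"
  then show "(\<Sum>p\<in>Paths N i. (1 - s) * g i p + s * f i p) = \<mu> i" using assms unfolding feasible_def
    by (simp add: sum.distrib sum_distrib_left[symmetric] algebra_simps sum_subtractf)
qed


definition bpr :: "('v, 'e, 'i) network \<Rightarrow> ('e \<Rightarrow> real \<Rightarrow> real) \<Rightarrow> ('e \<Rightarrow> real) \<Rightarrow> ('e \<Rightarrow> real) \<Rightarrow> real \<Rightarrow> bool" where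
  "bpr N c t a b \<longleftrightarrow> b \<ge> 0 \<and> (\<forall>e\<in>edges N. t e \<ge> 0 \<and> a e \<ge> 0) \<and>
     (\<forall>e\<in>edges N. \<forall>x\<ge>0. c e x = t e + a e * rpow x b)"

definition Phi :: "('e \<Rightarrow> real) \<Rightarrow> ('e \<Rightarrow> real) \<Rightarrow> real \<Rightarrow> 'e \<Rightarrow> real \<Rightarrow> real" where
  "Phi t a b e x = x * (t e + a e * rpow x b)"

definition hh :: "('e \<Rightarrow> real) \<Rightarrow> ('e \<Rightarrow> real) \<Rightarrow> real \<Rightarrow> 'e \<Rightarrow> real \<Rightarrow> real" where
  "hh t a b e x = t e / (b + 1) + a e * rpow x b"

lemma tc_edges:
  assumes "wf_network N" "bpr N c t a b" "feasible N \<mu> f"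
  shows "total_cost N c f = (\<Sum>e\<in>edges N. Phi t a b e (load N f e))"
proof -
  have "total_cost N c f = (\<Sum>e\<in>edges N. c e (load N f e) * load N f e)"
    unfolding total_cost_def path_cost_def using exchange[OF assms(1)] by simp
  also have "\<dots> = (\<Sum>e\<in>edges N. Phi t a b e (load N f e))"
    using assms(2) load_nonneg[OF assms(3)] by (intro sum.cong) (auto simp: bpr_def Phi_def)
  finally show ?thesis .
qed

lemma Phi_tangent:
  assumes "bpr N c t a b" "e \<in> edges N" "0 \<le> x" "0 \<le> y"
  shows "Phi t a b e y - Phi t a b e x \<ge> (b+1) * hh t a b e x * (y - x)"
proof -
  have b: "0 \<le> b" "0 \<le> a e" using assms by (auto simp: bpr_def)
  have "a e * ((b+1) * rpow x b * (y - x)) \<le> a e * (y * rpow y b - x * rpow x b)"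
    using rpow_tangent[OF assms(3,4) b(1)] b by (intro mult_left_mono)
  moreover have "(b+1) * hh t a b e x = t e + (b+1) * a e * rpow x b"
    using b by (simp add: hh_def field_simps)
  ultimately show ?thesis by (simp add: Phi_def algebra_simps)
qed

lemma hh_cont:
  assumes "0 \<le> b" "(g \<longlongrightarrow> x) F" "eventually (\<lambda>s. 0 \<le> g s) F"
  shows "((\<lambda>s. hh t a b e (g s)) \<longlongrightarrow> hh t a b e x) F"
proof (cases "b = 0")
  case True then show ?thesis by (simp add: hh_def rpow_def)
next
  case False
  then have "0 < b" using assms by simp
  then have "((\<lambda>s. g s powr b) \<longlongrightarrow> x powr b) F"
    using assms by (intro tendsto_powr') auto
  then show ?thesis using False by (auto simp: hh_def rpow_def intro!: tendsto_intros)
qed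

lemma first_order:
  assumes wf: "wf_network N" and bp: "bpr N c t a b" and so: "system_opt N c \<mu> gs"
    and fg: "feasible N \<mu> g"
  shows "0 \<le> (\<Sum>e\<in>edges N. hh t a b e (load N gs e) * (load N g e - load N gs e))"
proof -
  have fgs: "feasible N \<mu> gs" using so by (simp add: system_opt_def)
  have b: "0 \<le> b" using bp by (simp add: bpr_def)
  define xs where "xs e = load N gs e" for e
  define xg where "xg e = load N g e" for e
  define ld where "ld s e = (1 - s) * xs e + s * xg e" for s e
  define psi where "psi s = (\<Sum>e\<in>edges N. hh t a b e (ld s e) * (xg e - xs e))" for s
  have xs0: "0 \<le> xs e" "0 \<le> xg e" for e using load_nonneg fgs fg by (auto simp: xs_def xg_def)
  have ld0: "0 \<le> ld s e" if "0 \<le> s" "s \<le> 1" for s e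
    using xs0[of e] that by (simp add: ld_def)
  have pos: "0 \<le> psi s" if s: "0 < s" "s \<le> 1" for s
  proof -
    define gsum where "gsum = (\<lambda>i p. (1 - s) * gs i p + s * g i p)"
    have fsum: "feasible N \<mu> gsum" unfolding gsum_def using feasible_comb[OF fgs fg] s by simp
    have ldsum: "load N gsum e = ld s e" for e
      unfolding gsum_def ld_def xs_def xg_def by (rule load_comb)
    have "total_cost N c gs \<le> total_cost N c gsum" using so fsum by (simp add: system_opt_def)
    then have "0 \<le> (\<Sum>e\<in>edges N. Phi t a b e (ld s e) - Phi t a b e (xs e))"
      using tc_edges[OF wf bp fgs] tc_edges[OF wf bp fsum] ldsum
      by (simp add: sum_subtractf xs_def)
    also have "\<dots> \<le> (\<Sum>e\<in>edges N. (b+1) * s * (hh t a b e (ld s e) * (xg e - xs e)))"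
    proof (rule sum_mono)
      fix e assume e: "e \<in> edges N"
      have "Phi t a b e (xs e) - Phi t a b e (ld s e) \<ge> (b+1) * hh t a b e (ld s e) * (xs e - ld s e)"
        using Phi_tangent[OF bp e ld0[of s e] xs0(1)[of e]] s by simp
      moreover have "xs e - ld s e = - s * (xg e - xs e)" by (simp add: ld_def algebra_simps)
      ultimately show "Phi t a b e (ld s e) - Phi t a b e (xs e) \<le> (b+1) * s * (hh t a b e (ld s e) * (xg e - xs e))"
        by (simp add: algebra_simps)
    qed
    also have "\<dots> = (b+1) * s * psi s" by (simp add: psi_def sum_distrib_left)
    finally have "0 \<le> (b+1) * s * psi s" .
    moreover have "0 < (b+1) * s" using b s by simp
    ultimately show ?thesis by (simp add: zero_le_mult_iff)
  qed
  have lim: "(psi \<longlongrightarrow> psi 0) (at_right 0)"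
  proof -
    have ev: "eventually (\<lambda>s. s \<in> {0<..<1}) (at_right (0::real))" by (rule eventually_at_right_real) simp
    have "((\<lambda>s. hh t a b e (ld s e)) \<longlongrightarrow> hh t a b e (ld 0 e)) (at_right 0)" for e
    proof (rule hh_cont[OF b])
      show "((\<lambda>s. ld s e) \<longlongrightarrow> ld 0 e) (at_right 0)"
        unfolding ld_def by (intro tendsto_intros)
      show "eventually (\<lambda>s. 0 \<le> ld s e) (at_right 0)"
        using ev by eventually_elim (auto intro: ld0)
    qed
    then show ?thesis unfolding psi_def by (intro tendsto_intros)
  qed
  have "0 \<le> psi 0"
  proof (rule tendsto_lowerbound[OF lim])
    show "eventually (\<lambda>s. 0 \<le> psi s) (at_right 0)"
    proof -
      have "eventually (\<lambda>s. s \<in> {0<..<1}) (at_right (0::real))" by (rule eventually_at_right_real) simp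
      then show ?thesis by eventually_elim (auto intro: pos)
    qed
  qed simp
  moreover have "psi 0 = (\<Sum>e\<in>edges N. hh t a b e (load N gs e) * (load N g e - load N gs e))"
    unfolding psi_def ld_def xs_def xg_def by simp
  ultimately show ?thesis by simp
qed


lemma rpow_max_cont: assumes "0 \<le> b" shows "continuous_on UNIV (\<lambda>x. rpow (max 0 x) b)"
proof (cases "b = 0")
  case True then show ?thesis by (simp add: rpow_def)
next
  case False
  have "continuous_on UNIV (\<lambda>x. (max 0 x) powr b)"
    using False assms by (intro continuous_on_powr' continuous_intros) auto
  then show ?thesis using False by (simp add: rpow_def)
qed

lemma so_exists:
  fixes N :: "('v, 'e, 'i) network"
  assumes wf: "wf_network N" and bp: "bpr N c t a b" and dm: "demand N \<mu>" and f0: "feasible N \<mu> f0"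
  shows "\<exists>g. system_opt N c \<mu> g"
proof -
  have b: "0 \<le> b" using bp by (simp add: bpr_def)
  have fo: "finite (ods N)" and fe: "finite (edges N)" using wf by (auto simp: wf_network_def)
  define S where "S = Sigma (ods N) (Paths N)"
  have fS: "finite S" unfolding S_def using fo finite_Paths[OF wf] by auto
  define T where "T = product_topology (\<lambda>_. euclideanreal) S"
  define M where "M = (\<Sum>i\<in>ods N. \<mu> i)"
  define K0 where "K0 = PiE S (\<lambda>_. {0..M})"
  define H where "H G = (\<Sum>i\<in>ods N. \<bar>(\<Sum>p\<in>Paths N i. G (i,p)) - \<mu> i\<bar>)" for G :: "'i \<times> 'e list \<Rightarrow> real"
  define C where "C = {G \<in> topspace T. H G \<in> {0}}"
  define K where "K = C \<inter> K0"
  define LD where "LD G e = (\<Sum>ip\<in>S. G ip * (if e \<in> set (snd ip) then 1 else 0))" for G :: "'i \<times> 'e list \<Rightarrow> real" and e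
  define F where "F G = (\<Sum>e\<in>edges N. Phi t a b e (max 0 (LD G e)))" for G
  have projc: "continuous_map T euclideanreal (\<lambda>G. G ip)" if "ip \<in> S" for ip
    unfolding T_def using continuous_map_product_projection[OF that, of "\<lambda>_. euclideanreal"] by simp
  have Hc: "continuous_map T euclideanreal H"
    unfolding H_def
    by (intro continuous_map_sum continuous_map_real_abs continuous_map_diff continuous_map_const[THEN iffD2] projc)
       (auto simp: S_def fo finite_Paths[OF wf])
  have "closedin T C" unfolding C_def by (rule closedin_continuous_map_preimage[OF Hc]) simp
  moreover have "compactin T K0" unfolding T_def K0_def by (simp add: compactin_PiE)
  ultimately have cK: "compactin T K" unfolding K_def by (rule closed_Int_compactin)
  have LDc: "continuous_map T euclideanreal (\<lambda>G. LD G e)" for e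
    unfolding LD_def
    by (intro continuous_map_sum continuous_map_real_mult continuous_map_const[THEN iffD2] projc) (auto simp: fS)
  have Pc: "continuous_map euclideanreal euclideanreal (\<lambda>x. Phi t a b e (max 0 x))" for e
  proof -
    have "continuous_on UNIV (\<lambda>x. max 0 x * (t e + a e * rpow (max 0 x) b))"
      using rpow_max_cont[OF b] by (intro continuous_intros) auto
    then show ?thesis by (simp add: Phi_def)
  qed
  have Fc: "continuous_map T euclideanreal F"
  proof -
    have "continuous_map T euclideanreal ((\<lambda>x. Phi t a b e (max 0 x)) \<circ> (\<lambda>G. LD G e))" for e
      by (rule continuous_map_compose[OF LDc Pc])
    then show ?thesis unfolding F_def by (intro continuous_map_sum) (auto simp: o_def fe)
  qed
  have "compactin euclideanreal (F ` K)" by (rule image_compactin[OF cK Fc])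
  then have cFK: "compact (F ` K)" by simp
  have inK: "restrict (\<lambda>(i,p). g i p) S \<in> K" if g: "feasible N \<mu> g" for g
  proof -
    have le: "g i p \<le> M" if "i \<in> ods N" "p \<in> Paths N i" for i p
    proof -
      have "g i p \<le> (\<Sum>p\<in>Paths N i. g i p)"
        using g that finite_Paths[OF wf] by (intro member_le_sum) (auto simp: feasible_def)
      also have "\<dots> = \<mu> i" using g that by (simp add: feasible_def)
      also have "\<dots> \<le> M" unfolding M_def using dm that fo by (intro member_le_sum) (auto simp: demand_def)
      finally show ?thesis .
    qed
    have "restrict (\<lambda>(i,p). g i p) S \<in> K0" unfolding K0_def S_def
      using g le by (auto simp: feasible_def)
    moreover have "H (restrict (\<lambda>(i,p). g i p) S) = 0" unfolding H_def
      using g by (intro sum.neutral) (auto simp: feasible_def S_def)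
    ultimately show ?thesis unfolding K_def C_def T_def K0_def by auto
  qed
  have LDload: "LD (restrict (\<lambda>(i,p). g i p) S) e = load N g e" for g e
  proof -
    have "LD (restrict (\<lambda>(i,p). g i p) S) e = (\<Sum>(i,p)\<in>S. g i p * (if e \<in> set p then 1 else 0))"
      unfolding LD_def by (intro sum.cong) auto
    also have "\<dots> = (\<Sum>i\<in>ods N. \<Sum>p\<in>Paths N i. g i p * (if e \<in> set p then 1 else 0))"
      unfolding S_def using fo finite_Paths[OF wf] by (simp add: sum.Sigma)
    also have "\<dots> = load N g e" unfolding load_def by (intro sum.cong) auto
    finally show ?thesis .
  qed
  have tcF: "total_cost N c g = F (restrict (\<lambda>(i,p). g i p) S)" if g: "feasible N \<mu> g" for g
    unfolding F_def tc_edges[OF wf bp g] LDload using load_nonneg[OF g] by simp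
  have "F ` K \<noteq> {}" using inK[OF f0] by blast
  then obtain y where y: "y \<in> F ` K" "\<forall>z\<in>F ` K. y \<le> z" using compact_attains_inf[OF cFK] by blast
  then obtain Gs where Gs: "Gs \<in> K" "\<forall>G\<in>K. F Gs \<le> F G" by auto
  define gs where "gs i p = Gs (i,p)" for i p
  have GsPi: "Gs \<in> K0" "H Gs = 0" using Gs(1) unfolding K_def C_def by auto
  have rs: "restrict (\<lambda>(i,p). gs i p) S = Gs"
    using GsPi(1) unfolding gs_def K0_def by (simp add: case_prod_beta')
  have fgs: "feasible N \<mu> gs"
  proof -
    have "\<forall>i\<in>ods N. \<bar>(\<Sum>p\<in>Paths N i. Gs (i,p)) - \<mu> i\<bar> = 0"
      using GsPi(2) fo unfolding H_def by (subst (asm) sum_nonneg_eq_0_iff) auto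
    then show ?thesis using GsPi(1) unfolding feasible_def gs_def K0_def S_def by (auto simp: PiE_def Pi_def)
  qed
  have "system_opt N c \<mu> gs"
    unfolding system_opt_def
  proof (intro conjI allI impI fgs)
    fix g assume g: "feasible N \<mu> g"
    show "total_cost N c gs \<le> total_cost N c g"
      using tcF[OF g] tcF[OF fgs] rs Gs(2) inK[OF g] by simp
  qed
  then show ?thesis by blast
qed


theorem theorem2:
  fixes N :: "('v, 'e, 'i) network"
    and c :: "'e \<Rightarrow> real \<Rightarrow> real"
    and t a \<tau> :: "'e \<Rightarrow> real"
    and \<beta> :: real
  assumes "wf_network N"
    and "\<beta> \<ge> 0"
    and "\<forall>e\<in>edges N. t e \<ge> 0 \<and> a e \<ge> 0"
    and "\<forall>e\<in>edges N. \<forall>x\<ge>0. c e x = t e + a e * rpow x \<beta>"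
    and "\<forall>i\<in>ods N. \<forall>p\<in>SO_Paths N c i. \<forall>p'\<in>Paths N i.
           (\<Sum>e\<leftarrow>p. \<tau> e + \<beta> / (\<beta> + 1) * t e) \<le> (\<Sum>e\<leftarrow>p'. \<tau> e + \<beta> / (\<beta> + 1) * t e)"
  shows "DIOT N c \<tau>"
  unfolding DIOT_def
proof (intro allI impI)
  fix \<mu> f assume dm: "demand N \<mu>" and wd: "wardrop N (tolled c \<tau>) \<mu> f"
  have wf: "wf_network N" by fact
  have bp: "bpr N c t a \<beta>" using assms(2-4) by (simp add: bpr_def)
  have fe: "finite (edges N)" and fo: "finite (ods N)" using wf by (auto simp: wf_network_def)
  have ff: "feasible N \<mu> f" using wd by (simp add: wardrop_def)
  obtain gs where so: "system_opt N c \<mu> gs" using so_exists[OF wf bp dm ff] by blast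
  have fgs: "feasible N \<mu> gs" using so by (simp add: system_opt_def)
  define h where "h e x = hh t a \<beta> e x" for e x
  define pi where "pi e = \<tau> e + \<beta> / (\<beta> + 1) * t e" for e
  define xf where "xf e = load N f e" for e
  define xs where "xs e = load N gs e" for e
  have xf0: "0 \<le> xf e" and xs0: "0 \<le> xs e" for e
    using load_nonneg[OF ff] load_nonneg[OF fgs] by (auto simp: xf_def xs_def)
  have dec: "tolled c \<tau> e x = h e x + pi e" if "e \<in> edges N" "0 \<le> x" for e x
  proof -
    have ne: "\<beta> + 1 \<noteq> 0" using assms(2) by simp
    have "t e / (\<beta> + 1) + \<beta> / (\<beta> + 1) * t e = ((\<beta> + 1) * t e) / (\<beta> + 1)"
      by (simp add: add_divide_distrib algebra_simps)
    also have "\<dots> = t e" using ne by simp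
    finally have "t e / (\<beta> + 1) + \<beta> / (\<beta> + 1) * t e = t e" .
    then show ?thesis using assms(4) that by (simp add: tolled_def h_def hh_def pi_def algebra_simps)
  qed
  have pcost: "path_cost N (tolled c \<tau>) f p = (\<Sum>e\<leftarrow>p. h e (xf e) + pi e)" if "p \<in> Paths N i" for p i
    unfolding path_cost_def
    by (intro arg_cong[where f=sum_list] map_cong refl)
       (use path_edges[OF that] dec xf0 in \<open>auto simp: xf_def\<close>)
  have W0: "(\<Sum>i\<in>ods N. \<Sum>p\<in>Paths N i. path_cost N (tolled c \<tau>) f p * f i p)
         \<le> (\<Sum>i\<in>ods N. \<Sum>p\<in>Paths N i. path_cost N (tolled c \<tau>) f p * gs i p)"
  proof (rule sum_mono)
    fix i assume i: "i \<in> ods N"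
    show "(\<Sum>p\<in>Paths N i. path_cost N (tolled c \<tau>) f p * f i p)
         \<le> (\<Sum>p\<in>Paths N i. path_cost N (tolled c \<tau>) f p * gs i p)"
      using i ff fgs wd finite_Paths[OF wf]
      by (intro VI) (auto simp: feasible_def wardrop_def)
  qed
  have W: "(\<Sum>e\<in>edges N. (h e (xf e) + pi e) * xf e) \<le> (\<Sum>e\<in>edges N. (h e (xf e) + pi e) * xs e)"
  proof -
    have eq: "(\<Sum>i\<in>ods N. \<Sum>p\<in>Paths N i. path_cost N (tolled c \<tau>) f p * g i p)
          = (\<Sum>e\<in>edges N. (h e (xf e) + pi e) * load N g e)" for g
    proof -
      have "(\<Sum>i\<in>ods N. \<Sum>p\<in>Paths N i. path_cost N (tolled c \<tau>) f p * g i p)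
          = (\<Sum>i\<in>ods N. \<Sum>p\<in>Paths N i. g i p * (\<Sum>e\<leftarrow>p. h e (xf e) + pi e))"
        by (intro sum.cong refl) (simp add: pcost mult.commute)
      also have "\<dots> = (\<Sum>e\<in>edges N. (h e (xf e) + pi e) * load N g e)"
        by (rule exchange[OF wf])
      finally show ?thesis .
    qed
    show ?thesis using W0 eq[of f] eq[of gs] by (simp add: xf_def xs_def)
  qed
  have P: "(\<Sum>e\<in>edges N. pi e * xs e) \<le> (\<Sum>e\<in>edges N. pi e * xf e)"
  proof -
    have "(\<Sum>i\<in>ods N. \<Sum>p\<in>Paths N i. (\<Sum>e\<leftarrow>p. pi e) * gs i p)
         \<le> (\<Sum>i\<in>ods N. \<Sum>p\<in>Paths N i. (\<Sum>e\<leftarrow>p. pi e) * f i p)"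
    proof (rule sum_mono)
      fix i assume i: "i \<in> ods N"
      have "\<forall>p\<in>Paths N i. gs i p > 0 \<longrightarrow> (\<forall>p'\<in>Paths N i. (\<Sum>e\<leftarrow>p. pi e) \<le> (\<Sum>e\<leftarrow>p'. pi e))"
      proof (intro ballI impI)
        fix p p' assume p: "p \<in> Paths N i" "gs i p > 0" and p': "p' \<in> Paths N i"
        have "p \<in> SO_Paths N c i" unfolding SO_Paths_def using p dm so by blast
        then show "(\<Sum>e\<leftarrow>p. pi e) \<le> (\<Sum>e\<leftarrow>p'. pi e)" using assms(5) i p' by (simp add: pi_def)
      qed
      then show "(\<Sum>p\<in>Paths N i. (\<Sum>e\<leftarrow>p. pi e) * gs i p) \<le> (\<Sum>p\<in>Paths N i. (\<Sum>e\<leftarrow>p. pi e) * f i p)"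
        using i ff fgs finite_Paths[OF wf]
        by (intro VI) (auto simp: feasible_def)
    qed
    moreover have "(\<Sum>i\<in>ods N. \<Sum>p\<in>Paths N i. (\<Sum>e\<leftarrow>p. pi e) * g i p) = (\<Sum>e\<in>edges N. pi e * load N g e)" for g
      using exchange[OF wf, of g pi] by (simp add: mult.commute)
    ultimately show ?thesis by (simp add: xf_def xs_def)
  qed
  have S1: "0 \<le> (\<Sum>e\<in>edges N. h e (xf e) * (xs e - xf e))"
  proof -
    have "(\<Sum>e\<in>edges N. (h e (xf e) + pi e) * xf e) = (\<Sum>e\<in>edges N. h e (xf e) * xf e) + (\<Sum>e\<in>edges N. pi e * xf e)"
      by (simp add: distrib_right sum.distrib)
    moreover have "(\<Sum>e\<in>edges N. (h e (xf e) + pi e) * xs e) = (\<Sum>e\<in>edges N. h e (xf e) * xs e) + (\<Sum>e\<in>edges N. pi e * xs e)"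
      by (simp add: distrib_right sum.distrib)
    moreover have "(\<Sum>e\<in>edges N. h e (xf e) * (xs e - xf e)) = (\<Sum>e\<in>edges N. h e (xf e) * xs e) - (\<Sum>e\<in>edges N. h e (xf e) * xf e)"
      by (simp add: right_diff_distrib sum_subtractf)
    ultimately show ?thesis using W P by linarith
  qed
  have S2: "0 \<le> (\<Sum>e\<in>edges N. h e (xs e) * (xf e - xs e))"
    using first_order[OF wf bp so ff] by (simp add: h_def xs_def xf_def)
  have mono: "0 \<le> (h e (xf e) - h e (xs e)) * (xf e - xs e)" if e: "e \<in> edges N" for e
  proof -
    have a0: "0 \<le> a e" using assms(3) e by auto
    show ?thesis
    proof (cases "xf e \<le> xs e")
      case True
      then have "rpow (xf e) \<beta> \<le> rpow (xs e) \<beta>" using rpow_mono assms(2) xf0 by blast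
      then have "h e (xf e) \<le> h e (xs e)" using a0 by (simp add: h_def hh_def mult_left_mono)
      then show ?thesis using True by (simp add: mult_nonpos_nonpos)
    next
      case False
      then have "rpow (xs e) \<beta> \<le> rpow (xf e) \<beta>" using rpow_mono assms(2) xs0 by force
      then have "h e (xs e) \<le> h e (xf e)" using a0 by (simp add: h_def hh_def mult_left_mono)
      then show ?thesis using False by simp
    qed
  qed
  have sumid: "(\<Sum>e\<in>edges N. h e (xf e) * (xs e - xf e)) + (\<Sum>e\<in>edges N. h e (xs e) * (xf e - xs e))
      = - (\<Sum>e\<in>edges N. (h e (xf e) - h e (xs e)) * (xf e - xs e))"
    by (simp add: sum.distrib[symmetric] sum_negf[symmetric] algebra_simps)
  have T0: "0 \<le> (\<Sum>e\<in>edges N. (h e (xf e) - h e (xs e)) * (xf e - xs e))"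
    using mono by (intro sum_nonneg) auto
  have S2z: "(\<Sum>e\<in>edges N. h e (xs e) * (xf e - xs e)) = 0" using S1 S2 sumid T0 by linarith
  have "(\<Sum>e\<in>edges N. (h e (xf e) - h e (xs e)) * (xf e - xs e)) = 0" using S1 S2 sumid T0 by linarith
  then have "\<forall>e\<in>edges N. (h e (xf e) - h e (xs e)) * (xf e - xs e) = 0"
    using mono by (subst (asm) sum_nonneg_eq_0_iff[OF fe]) auto
  then have heq: "h e (xf e) = h e (xs e)" if "e \<in> edges N" for e
    using that by (cases "xf e = xs e") auto
  show "system_opt N c \<mu> f"
    unfolding system_opt_def
  proof (intro conjI allI impI ff)
    fix g assume fg: "feasible N \<mu> g"
    define xg where "xg e = load N g e" for e
    have xg0: "0 \<le> xg e" for e using load_nonneg[OF fg] by (simp add: xg_def)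
    have B: "0 \<le> (\<Sum>e\<in>edges N. h e (xs e) * (xg e - xs e))"
      using first_order[OF wf bp so fg] by (simp add: h_def xs_def xg_def)
    have "(\<Sum>e\<in>edges N. (\<beta>+1) * h e (xf e) * (xg e - xf e))
        = (\<beta>+1) * ((\<Sum>e\<in>edges N. h e (xs e) * (xg e - xs e)) - (\<Sum>e\<in>edges N. h e (xs e) * (xf e - xs e)))"
    proof -
      have "(\<Sum>e\<in>edges N. (\<beta>+1) * h e (xf e) * (xg e - xf e)) = (\<Sum>e\<in>edges N. (\<beta>+1) * (h e (xs e) * (xg e - xs e) - h e (xs e) * (xf e - xs e)))"
        by (intro sum.cong refl) (simp add: heq algebra_simps)
      also have "\<dots> = (\<beta>+1) * (\<Sum>e\<in>edges N. h e (xs e) * (xg e - xs e) - h e (xs e) * (xf e - xs e))"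
        by (simp add: sum_distrib_left)
      also have "\<dots> = (\<beta>+1) * ((\<Sum>e\<in>edges N. h e (xs e) * (xg e - xs e)) - (\<Sum>e\<in>edges N. h e (xs e) * (xf e - xs e)))"
        by (simp only: sum_subtractf)
      finally show ?thesis .
    qed
    also have "\<dots> \<ge> 0" using B S2z assms(2) by simp
    finally have "0 \<le> (\<Sum>e\<in>edges N. (\<beta>+1) * h e (xf e) * (xg e - xf e))" .
    also have "\<dots> \<le> (\<Sum>e\<in>edges N. Phi t a \<beta> e (xg e) - Phi t a \<beta> e (xf e))"
      using Phi_tangent[OF bp _ xf0 xg0] by (intro sum_mono) (simp add: h_def)
    also have "\<dots> = total_cost N c g - total_cost N c f"
      using tc_edges[OF wf bp fg] tc_edges[OF wf bp ff] by (simp add: sum_subtractf xg_def xf_def)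
    finally show "total_cost N c f \<le> total_cost N c g" by simp
  qed
qed

end
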